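(* Let $p, q$ be probability distributions on a finite set $\mathcal{X}$ with $\mathrm{supp}(p)\subseteq\mathrm{supp}(q)$, let $L>0$, and let $\rho(x) := \log_2(p(x)/q(x))$ for $x\in\mathrm{supp}(p)$. Define $\eta_L(p,q) := D_{\mathrm{KL}}(p\|q) - D_{\mathrm{KL},L}(p\|q)$. Then \[ |\eta_L(p,q)| \le \mathbb{E}_{X\sim p}\bigl[(|\rho(X)|-L)\,\mathbf{1}\{|\rho(X)|>L\}\bigr], \] and hence \[ |\eta_L(p,q)| \le \Bigl(\log_2(1/p_{\min}) + \log_2(1/q_{\min})\Bigr)\Pr_{X\sim p}\bigl[|\rho(X)|>L\bigr], \] where $p_{\min} = \min_{x\in\mathrm{supp}(p)} p(x)$ and $q_{\min} = \min_{x\in\mathrm{supp}(q)} q(x)$. In particular, if $2^{-L}p(x)\le q(x)\le 2^{L}p(x)$ for every $x\in\mathrm{supp}(p)$ (equivalently $|\rho(x)|\le L$ on $\mathrm{supp}(p)$), then $\eta_L(p,q)=0$ and $D_{\mathrm{KL},L}(p\|q) = D_{\mathrm{KL}}(p\|q)$.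
   Context: All logarithms are base 2. $D_{\mathrm{KL}}(p\|q) = \sum_x p(x)\log_2(p(x)/q(x))$. For $u\in\mathbb{R}$, $\mathrm{clip}_L(u) := \max(-L,\min(L,u))$. The clipped log-ratio is $\ell_L(x) := \mathrm{clip}_L(\log_2(p(x)/q(x)))$ (with conventions $\log_2(p/0)=+\infty$ for $p>0$, $\log_2(0/q)=-\infty$ for $q>0$), and the clipped KL expectation is $D_{\mathrm{KL},L}(p\|q) := \sum_{x\in\mathcal{X}} p(x)\,\ell_L(x)$. *)

theory Defs
  imports "HOL-Analysis.Analysis"
begin

definition is_distr :: "('a::finite \<Rightarrow> real) \<Rightarrow> bool" where
  "is_distr p \<longleftrightarrow> (\<forall>x. 0 \<le> p x) \<and> (\<Sum>x\<in>UNIV. p x) = 1"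

definition supp :: "('a \<Rightarrow> real) \<Rightarrow> 'a set" where
  "supp p = {x. p x > 0}"

definition clip :: "real \<Rightarrow> real \<Rightarrow> real" where
  "clip L u = max (- L) (min L u)"

text \<open>Clipped log-ratio with the conventions log(p/0) = +inf (p>0), log(0/q) = -inf (q>0).
  The case p x = q x = 0 is irrelevant (weighted by p x = 0); we set it to 0.\<close>
definition clipped_logratio :: "real \<Rightarrow> ('a \<Rightarrow> real) \<Rightarrow> ('a \<Rightarrow> real) \<Rightarrow> 'a \<Rightarrow> real" where
  "clipped_logratio L p q x =
     (if p x > 0 \<and> q x = 0 then L
      else if p x = 0 \<and> q x > 0 then - L
      else if p x = 0 \<and> q x = 0 then 0
      else clip L (log 2 (p x / q x)))"

definition KL_clip :: "real \<Rightarrow> ('a::finite \<Rightarrow> real) \<Rightarrow> ('a \<Rightarrow> real) \<Rightarrow> real" where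
  "KL_clip L p q = (\<Sum>x\<in>UNIV. p x * clipped_logratio L p q x)"

text \<open>KL divergence (base 2), with the convention 0 log(0/q) = 0; only used when supp p \<subseteq> supp q,
  where it is finite.\<close>
definition KL :: "('a::finite \<Rightarrow> real) \<Rightarrow> ('a \<Rightarrow> real) \<Rightarrow> real" where
  "KL p q = (\<Sum>x\<in>supp p. p x * log 2 (p x / q x))"

end

theory Submission
  imports Defs
begin

lemma clip_diff: "L > 0 \<Longrightarrow> \<bar>u - clip L u\<bar> = (if \<bar>u\<bar> > L then \<bar>u\<bar> - L else 0)"
  unfolding clip_def by auto

theorem lemma1:
  fixes p q :: "'a::finite \<Rightarrow> real" and L :: real
  assumes "is_distr p" and "is_distr q"
    and "supp p \<subseteq> supp q"
    and "L > 0"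
  shows
   "\<bar>KL p q - KL_clip L p q\<bar>
      \<le> (\<Sum>x\<in>supp p. p x * (if \<bar>log 2 (p x / q x)\<bar> > L
                                then \<bar>log 2 (p x / q x)\<bar> - L else 0))
    \<and> \<bar>KL p q - KL_clip L p q\<bar>
      \<le> (log 2 (1 / Min (p ` supp p)) + log 2 (1 / Min (q ` supp q)))
         * (\<Sum>x\<in>{x\<in>supp p. \<bar>log 2 (p x / q x)\<bar> > L}. p x)
    \<and> ((\<forall>x\<in>supp p. 2 powr (- L) * p x \<le> q x \<and> q x \<le> 2 powr L * p x)
        \<longrightarrow> KL p q - KL_clip L p q = 0 \<and> KL_clip L p q = KL p q)"
proof -
  define rho where "rho x = log 2 (p x / q x)" for x
  define e where "e x = (if \<bar>rho x\<bar> > L then \<bar>rho x\<bar> - L else 0)" for x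
  have p0: "\<And>x. 0 \<le> p x" and q0: "\<And>x. 0 \<le> q x" using assms(1,2) unfolding is_distr_def by auto
  have psum: "(\<Sum>x\<in>UNIV. p x) = 1" and qsum: "(\<Sum>x\<in>UNIV. q x) = 1"
    using assms(1,2) unfolding is_distr_def by auto
  have qpos: "\<And>x. x \<in> supp p \<Longrightarrow> q x > 0" "\<And>x. x \<in> supp p \<Longrightarrow> p x > 0"
    using assms(3) unfolding supp_def by auto
  have clipeq: "KL_clip L p q = (\<Sum>x\<in>supp p. p x * clip L (rho x))"
    unfolding KL_clip_def
  proof (rule sym, rule sum.mono_neutral_cong_left)
    show "\<forall>i\<in>UNIV - supp p. p i * clipped_logratio L p q i = 0"
      using p0 unfolding supp_def by (auto simp: order.order_iff_strict)
    show "\<And>x. x\<in>supp p \<Longrightarrow> p x * clip L (rho x) = p x * clipped_logratio L p q x"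
    proof -
      fix x assume "x \<in> supp p"
      then have "p x > 0" "q x > 0" using qpos by auto
      then show "p x * clip L (rho x) = p x * clipped_logratio L p q x"
        unfolding clipped_logratio_def rho_def by simp
    qed
  qed auto
  have diff: "KL p q - KL_clip L p q = (\<Sum>x\<in>supp p. p x * (rho x - clip L (rho x)))"
    unfolding clipeq KL_def rho_def by (simp add: sum_subtractf[symmetric] algebra_simps)
  have P1: "\<bar>KL p q - KL_clip L p q\<bar> \<le> (\<Sum>x\<in>supp p. p x * e x)"
  proof -
    have "\<bar>KL p q - KL_clip L p q\<bar> \<le> (\<Sum>x\<in>supp p. \<bar>p x * (rho x - clip L (rho x))\<bar>)"
      unfolding diff by (rule sum_abs)
    also have "\<dots> = (\<Sum>x\<in>supp p. p x * e x)"
      using p0 assms(4) by (simp add: abs_mult clip_diff e_def)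
    finally show ?thesis .
  qed
  define A where "A = log 2 (1 / Min (p ` supp p)) + log 2 (1 / Min (q ` supp q))"
  have P2: "\<bar>KL p q - KL_clip L p q\<bar> \<le> A * (\<Sum>x\<in>{x\<in>supp p. \<bar>rho x\<bar> > L}. p x)"
  proof -
    have bnd: "e x \<le> A * (if \<bar>rho x\<bar> > L then 1 else 0)" if xs: "x \<in> supp p" for x
    proof -
      have fp: "finite (p ` supp p)" "p ` supp p \<noteq> {}" using xs by auto
      have fq: "finite (q ` supp q)" "q ` supp q \<noteq> {}" using xs assms(3) by auto
      have pm: "Min (p ` supp p) \<le> p x" using fp xs by simp
      have qm: "Min (q ` supp q) \<le> q x" using fq xs assms(3) by auto
      have pmpos: "Min (p ` supp p) > 0" using fp by (subst Min_gr_iff) (auto simp: supp_def)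
      have qmpos: "Min (q ` supp q) > 0" using fq by (subst Min_gr_iff) (auto simp: supp_def)
      have le1: "p y \<le> 1" "q y \<le> 1" for y
      proof -
        have "p y \<le> (\<Sum>x\<in>UNIV. p x)" by (rule member_le_sum) (auto simp: p0)
        then show "p y \<le> 1" using psum by simp
        have "q y \<le> (\<Sum>x\<in>UNIV. q x)" by (rule member_le_sum) (auto simp: q0)
        then show "q y \<le> 1" using qsum by simp
      qed
      have px: "p x > 0" and qx: "q x > 0" using qpos xs by auto
      have r: "rho x = log 2 (p x) - log 2 (q x)" unfolding rho_def using px qx by (simp add: log_divide)
      have a1: "log 2 (1 / Min (p ` supp p)) = - log 2 (Min (p ` supp p))"
        using pmpos by (simp add: log_divide)
      have a2: "log 2 (1 / Min (q ` supp q)) = - log 2 (Min (q ` supp q))"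
        using qmpos by (simp add: log_divide)
      have l1: "log 2 (p x) \<le> 0" "log 2 (q x) \<le> 0" using px qx le1 by auto
      have l2: "log 2 (Min (p ` supp p)) \<le> log 2 (p x)" using pm pmpos by simp
      have l3: "log 2 (Min (q ` supp q)) \<le> log 2 (q x)" using qm qmpos by simp
      have "\<bar>rho x\<bar> \<le> A" unfolding r A_def a1 a2 using l1 l2 l3 by linarith
      then show ?thesis unfolding e_def using assms(4) by auto
    qed
    have "(\<Sum>x\<in>supp p. p x * e x) \<le> (\<Sum>x\<in>supp p. p x * (A * (if \<bar>rho x\<bar> > L then 1 else 0)))"
      by (rule sum_mono, rule mult_left_mono) (use bnd p0 in auto)
    also have "\<dots> = A * (\<Sum>x\<in>supp p. (if \<bar>rho x\<bar> > L then p x else 0))"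
      by (simp add: sum_distrib_left algebra_simps if_distrib cong: if_cong)
    also have "(\<Sum>x\<in>supp p. (if \<bar>rho x\<bar> > L then p x else 0)) = (\<Sum>x\<in>{x\<in>supp p. \<bar>rho x\<bar> > L}. p x)"
      by (simp add: sum.inter_filter)
    finally show ?thesis using P1 by linarith
  qed
  have P3: "KL p q - KL_clip L p q = 0"
    if h: "\<forall>x\<in>supp p. 2 powr (- L) * p x \<le> q x \<and> q x \<le> 2 powr L * p x"
  proof -
    have "e x = 0" if xs: "x \<in> supp p" for x
    proof -
      have px: "p x > 0" and qx: "q x > 0" using qpos xs by auto
      have h1: "2 powr (- L) * p x \<le> q x" "q x \<le> 2 powr L * p x" using h xs by auto
      have "log 2 (2 powr (- L) * p x) \<le> log 2 (q x)" using h1 px qx by simp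
      hence a: "- L + log 2 (p x) \<le> log 2 (q x)" using px by (simp add: log_mult)
      have "log 2 (q x) \<le> log 2 (2 powr L * p x)" using h1 px qx by simp
      hence b: "log 2 (q x) \<le> L + log 2 (p x)" using px by (simp add: log_mult)
      have r: "rho x = log 2 (p x) - log 2 (q x)" unfolding rho_def using px qx by (simp add: log_divide)
      have "\<bar>rho x\<bar> \<le> L" unfolding r using a b by linarith
      then show ?thesis unfolding e_def by simp
    qed
    hence "(\<Sum>x\<in>supp p. p x * e x) = 0" by simp
    thus ?thesis using P1 by linarith
  qed
  show ?thesis using P1 P2 P3 unfolding e_def rho_def A_def by auto
qed

end
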